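(* Let $V$ be a real bounded sequence with $V_n\ge C$ for all $n\ge1$, for some $C>0$, and $n(V_{n+1}-V_n)\in\ell^1$. Let $b_n=V_n+2$, $S_n=\frac12\big(V_n+2+\sqrt{V_n(V_n+4)}\big)$, and let $z_n$, $C_z$, $\phi^\pm$, $\widetilde V$ be as defined below. Then: (a) $S_{n+1}-S_n\in\ell^1$; (b) $V_n$ converges to a nonzero limit $V_\infty$, and the infinite product defining $C_z$ converges to a finite nonzero number, so $C_z$ is well defined; (c) $z_nz_{n+1}=1/\sqrt{V_{n+1}(V_{n+1}+4)}$ and $z_m-[V_\infty(V_\infty+4)]^{-1/4}\in\ell^1$ (as a sequence in $m$); (d) $\lim_{n\to\infty}\widetilde V_n=V_\infty$, and the Green matrix $G_{mn}=\phi^+_{\min(m,n)}\phi^-_{\max(m,n)}$ of $-\Delta+\widetilde V$ and the product $\phi^+_n\phi^-_n$ are uniformly bounded; (e) $\widetilde V_n-V_n\in\ell^1$, and consequently (taking $\widetilde V$ as comparison potential) $(-\Delta+V)\psi=0$ has a solution $\psi^-$ with $\psi^-_n=\phi^-_n+r_n\max_{k\ge n}|\phi^-_k|$, where $r_n\to0$.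
   Context: $(\Delta f)_n=f_{n+1}+f_{n-1}-2f_n$; $(-\Delta+V)\psi=0$ means $-\psi_{n+1}-\psi_{n-1}+(2+V_n)\psi_n=0$. Note $b_n^2-4=V_n(V_n+4)$. Define $C_z:=\big(V_\infty(V_\infty+4)\big)^{-1/4}\prod_{m=1}^\infty\sqrt{\frac{V_{2m}(V_{2m}+4)}{V_{2m-1}(V_{2m-1}+4)}}$ and, for $n\ge1$, $z_n:=C_z^{(-1)^n}\Big(\frac{\prod_{1\le k\le n-1,\,k\equiv n-1\ (\mathrm{mod}\ 2)}(b_k^2-4)}{\prod_{1\le k\le n,\,k\equiv n\ (\mathrm{mod}\ 2)}(b_k^2-4)}\Big)^{1/2}$ (the factor alternates between $C_z$ and $C_z^{-1}$). Set $\phi^\pm_n=z_n\prod_{\ell=1}^nS_\ell^{\pm1}$ and $\widetilde V_n=\frac{z_{n+1}}{z_n}S_{n+1}+\frac{z_{n-1}}{z_nS_n}-2$ (so that $(-\Delta+\widetilde V)\phi^\pm=0$). *)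

theory Defs
  imports "HOL-Analysis.Analysis"
begin

(* The potential V is a sequence indexed by n >= 1; the value V 0 is irrelevant. *)

definition Vinf :: "(nat \<Rightarrow> real) \<Rightarrow> real" where
  "Vinf V = lim V"

definition bb :: "(nat \<Rightarrow> real) \<Rightarrow> nat \<Rightarrow> real" where
  "bb V n = V n + 2"

definition SS :: "(nat \<Rightarrow> real) \<Rightarrow> nat \<Rightarrow> real" where
  "SS V n = (V n + 2 + sqrt (V n * (V n + 4))) / 2"

definition Czfac :: "(nat \<Rightarrow> real) \<Rightarrow> nat \<Rightarrow> real" where
  "Czfac V m = sqrt ((V (2*m) * (V (2*m) + 4)) / (V (2*m - 1) * (V (2*m - 1) + 4)))"

definition Cz :: "(nat \<Rightarrow> real) \<Rightarrow> real" where
  "Cz V = (Vinf V * (Vinf V + 4)) powr (-1/4) * prodinf (\<lambda>m. Czfac V (Suc m))"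

(* z_n; for n = 0 the same formula (empty products) gives z_0 = C_z *)
definition zz :: "(nat \<Rightarrow> real) \<Rightarrow> nat \<Rightarrow> real" where
  "zz V n = (if even n then Cz V else inverse (Cz V)) *
     sqrt ((\<Prod>k\<in>{k. 1 \<le> k \<and> k \<le> n - 1 \<and> k mod 2 = (n - 1) mod 2}. bb V k ^ 2 - 4) /
           (\<Prod>k\<in>{k. 1 \<le> k \<and> k \<le> n \<and> k mod 2 = n mod 2}. bb V k ^ 2 - 4))"

definition phip :: "(nat \<Rightarrow> real) \<Rightarrow> nat \<Rightarrow> real" where
  "phip V n = zz V n * (\<Prod>l=1..n. SS V l)"

definition phim :: "(nat \<Rightarrow> real) \<Rightarrow> nat \<Rightarrow> real" where
  "phim V n = zz V n * (\<Prod>l=1..n. inverse (SS V l))"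

definition Vt :: "(nat \<Rightarrow> real) \<Rightarrow> nat \<Rightarrow> real" where
  "Vt V n = zz V (n + 1) / zz V n * SS V (n + 1) + zz V (n - 1) / (zz V n * SS V n) - 2"

end

theory Submission
  imports Defs
begin


lemma exp_m1_bound: "\<bar>exp x - 1\<bar> \<le> exp \<bar>x\<bar> * \<bar>x\<bar>" for x :: real
proof (cases "x \<ge> 0")
  case True
  have "1 + - x \<le> exp (- x)" by (rule exp_ge_add_one_self)
  hence "(1 - x) * exp x \<le> exp (-x) * exp x" by (intro mult_right_mono) auto
  also have "\<dots> = 1" by (simp add: exp_minus field_simps)
  finally have "exp x - 1 \<le> exp x * x" by (simp add: algebra_simps)
  moreover have "exp x \<ge> 1" using True by simp
  ultimately show ?thesis using True by simp
next
  case False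
  have "1 - exp x \<le> - x" using exp_ge_add_one_self[of x] by linarith
  moreover have "exp x \<le> 1" using False by simp
  ultimately have "\<bar>exp x - 1\<bar> \<le> 1 * \<bar>x\<bar>" using False by simp
  also have "\<dots> \<le> exp \<bar>x\<bar> * \<bar>x\<bar>" by (intro mult_right_mono) auto
  finally show ?thesis .
qed

lemma tail_summable:
  fixes f :: "nat \<Rightarrow> real"
  assumes f0: "\<And>n. f n \<ge> 0" and s: "summable (\<lambda>n. real n * f n)"
  shows "summable (\<lambda>n. \<Sum>k. f (k+n))"
proof -
  have sf: "summable f"
  proof (rule summable_comparison_test'[OF s, of 1])
    fix n :: nat assume "1 \<le> n"
    thus "norm (f n) \<le> real n * f n" using f0[of n] by (simp add: mult_le_cancel_right1)
  qed
  define R where "R n = (\<Sum>k. f (k+n))" for n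
  have sR: "summable (\<lambda>k. f (k+n))" for n using sf summable_iff_shift by blast
  have Rrec: "R n = f n + R (Suc n)" for n
    using suminf_split_head[OF sR[of n]] by (simp add: R_def)
  have s': "summable (\<lambda>k. real (k+N) * f (k+N))" for N
    using s summable_iff_shift[of "\<lambda>n. real n * f n" N] by simp
  have NR: "real N * R N \<le> (\<Sum>j. real j * f j)" for N
  proof -
    have "real N * R N = (\<Sum>k. real N * f (k+N))" unfolding R_def using sR by (simp add: suminf_mult)
    also have "\<dots> \<le> (\<Sum>k. real (k+N) * f (k+N))"
      using sR[of N] s'[of N] f0 by (intro suminf_le summable_mult) (auto intro: mult_right_mono)
    also have "\<dots> \<le> (\<Sum>j. real j * f j)"
      using suminf_split_initial_segment[OF s, of N] f0 by (simp add: sum_nonneg)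
    finally show ?thesis .
  qed
  have id: "(\<Sum>n<N. R n) = (\<Sum>k<N. (real k + 1) * f k) + real N * R N" for N
  proof (induction N)
    case (Suc N) then show ?case using Rrec[of N] by (simp add: algebra_simps)
  qed simp
  have bnd: "(\<Sum>k<N. (real k + 1) * f k) \<le> (\<Sum>j. real j * f j) + suminf f" for N
  proof -
    have "(\<Sum>k<N. (real k + 1) * f k) = (\<Sum>k<N. real k * f k) + (\<Sum>k<N. f k)"
      by (simp add: algebra_simps sum.distrib)
    also have "\<dots> \<le> (\<Sum>j. real j * f j) + suminf f"
      using s sf f0 by (intro add_mono sum_le_suminf) auto
    finally show ?thesis .
  qed
  show ?thesis
  proof (rule summableI_nonneg_bounded)
    fix N
    show "(\<Sum>n<N. \<Sum>k. f (k+n)) \<le> 2 * (\<Sum>j. real j * f j) + suminf f"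
      using id[of N] bnd[of N] NR[of N] unfolding R_def by linarith
  qed (use f0 sR in \<open>auto intro: suminf_nonneg\<close>)
qed

lemma twostep:
  fixes x h :: "nat \<Rightarrow> real"
  assumes h0: "\<And>n. h n \<ge> 0" and sh: "summable h"
    and st: "\<And>n. \<bar>x (n+2) - x n\<bar> \<le> h n" and lim: "(\<lambda>M. x (n + 2*M)) \<longlonglongrightarrow> 0"
  shows "\<bar>x n\<bar> \<le> (\<Sum>k. h (k+n))"
proof -
  have sh': "summable (\<lambda>k. h (n+k))" using sh summable_iff_shift[of h n] by (simp add: add.commute)
  have ind: "\<bar>x n\<bar> \<le> \<bar>x (n + 2*M)\<bar> + (\<Sum>k<2*M. h (n+k))" for M
  proof (induction M)
    case (Suc M)
    have e: "(\<Sum>k<2*Suc M. h (n+k)) = (\<Sum>k<2*M. h (n+k)) + h (n+2*M) + h (n + Suc (2*M))" by simp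
    have st': "\<bar>x (n + 2*M)\<bar> \<le> \<bar>x (n + 2*M + 2)\<bar> + h (n + 2*M)" using st[of "n+2*M"] by linarith
    have e2: "n + 2 * Suc M = n + 2*M + 2" by simp
    show ?case unfolding e e2 using Suc.IH st' h0[of "n + Suc (2*M)"] by linarith
  qed simp
  have le: "(\<Sum>k<2*M. h (n+k)) \<le> (\<Sum>k. h (n+k))" for M
    using sh' h0 by (intro sum_le_suminf) auto
  have eq: "(\<Sum>k. h (k+n)) = (\<Sum>k. h (n+k))" by (simp add: add.commute)
  have *: "\<bar>x n\<bar> - (\<Sum>k. h (k+n)) \<le> \<bar>x (n + 2*M)\<bar>" for M
    unfolding eq using ind[of M] le[of M] by linarith
  have "(\<lambda>M. \<bar>x (n + 2*M)\<bar>) \<longlonglongrightarrow> 0" using tendsto_rabs_zero[OF lim] .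
  hence "\<bar>x n\<bar> - (\<Sum>k. h (k+n)) \<le> 0"
    by (rule LIMSEQ_le_const) (use * in auto)
  thus ?thesis by simp
qed

locale T5 =
  fixes V :: "nat \<Rightarrow> real" and C :: real
  assumes bdd: "bounded (range V)"
    and Cpos: "C > 0"
    and lower: "\<And>n. n \<ge> 1 \<Longrightarrow> V n \<ge> C"
    and l1: "summable (\<lambda>n. \<bar>real n * (V (n + 1) - V n)\<bar>)"
begin

definition d where "d n = V (Suc n) - V n"
definition B where "B = (SOME B. \<forall>n. \<bar>V n\<bar> \<le> B)"
definition a where "a n = V n * (V n + 4)"
definition m0 where "m0 = C * (C + 4)"

lemma B: "\<bar>V n\<bar> \<le> B"
proof -
  obtain b where "\<forall>x\<in>range V. norm x \<le> b" using bdd bounded_iff by metis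
  hence "\<exists>B. \<forall>n. \<bar>V n\<bar> \<le> B" by auto
  from someI_ex[OF this] show ?thesis unfolding B_def by blast
qed

lemma CB: "C \<le> B" using lower[of 1] B[of 1] by simp

lemma m0pos: "m0 > 0" using Cpos unfolding m0_def by simp

lemma a_ge: "n \<ge> 1 \<Longrightarrow> a n \<ge> m0"
  unfolding a_def m0_def using lower[of n] Cpos by (intro mult_mono) auto

lemma a_pos: "n \<ge> 1 \<Longrightarrow> a n > 0" using a_ge m0pos by (meson less_le_trans)

lemma absd_summable: "summable (\<lambda>n. \<bar>d n\<bar>)"
proof (rule summable_comparison_test'[OF l1, of 1])
  fix n :: nat assume "1 \<le> n"
  hence "\<bar>d n\<bar> \<le> real n * \<bar>d n\<bar>" by (simp add: mult_le_cancel_right1)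
  thus "norm \<bar>d n\<bar> \<le> \<bar>real n * (V (n + 1) - V n)\<bar>" by (simp add: d_def abs_mult)
qed

lemma V_conv: "V \<longlonglongrightarrow> Vinf V"
proof -
  have "summable d" using absd_summable summable_norm_cancel by (simp add: summable_norm_cancel)
  hence "convergent (\<lambda>n. sum d {..<n})" using summable_iff_convergent by blast
  then obtain l where l: "(\<lambda>n. sum d {..<n}) \<longlonglongrightarrow> l" by (auto simp: convergent_def)
  have "(\<lambda>n. V 0 + sum d {..<n}) = V" by (rule ext, simp add: d_def sum_lessThan_telescope)
  with l have "V \<longlonglongrightarrow> V 0 + l" by (metis tendsto_add_const_iff)
  thus ?thesis unfolding Vinf_def by (metis limI)
qed

lemma Vinf_ge: "Vinf V \<ge> C"
  using V_conv by (rule LIMSEQ_le_const) (use lower in auto)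

lemma a_lip: "n \<ge> 1 \<Longrightarrow> m \<ge> 1 \<Longrightarrow> \<bar>a n - a m\<bar> \<le> (2*B+4) * \<bar>V n - V m\<bar>"
proof -
  assume "n \<ge> 1" "m \<ge> 1"
  have "a n - a m = (V n - V m) * (V n + V m + 4)" unfolding a_def by algebra
  hence "\<bar>a n - a m\<bar> = \<bar>V n - V m\<bar> * \<bar>V n + V m + 4\<bar>" by (simp add: abs_mult)
  also have "\<dots> \<le> \<bar>V n - V m\<bar> * (2*B+4)"
    using B[of n] B[of m] by (intro mult_left_mono) auto
  finally show ?thesis by (simp add: mult.commute)
qed

lemma ln_lip: "x \<ge> m \<Longrightarrow> y \<ge> m \<Longrightarrow> m > 0 \<Longrightarrow> \<bar>ln x - ln y\<bar> \<le> \<bar>x - y\<bar> / (m::real)"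
proof -
  assume h: "x \<ge> m" "y \<ge> m" "m > 0"
  have 1: "ln u - ln v \<le> \<bar>u - v\<bar> / m" if "u \<ge> m" "v \<ge> m" for u v
  proof -
    have "ln u - ln v = ln (u/v)" using that h by (simp add: ln_div)
    also have "\<dots> \<le> u/v - 1" using that h by (intro ln_le_minus_one) auto
    also have "\<dots> = (u - v)/v" using that h by (simp add: field_simps)
    also have "\<dots> \<le> \<bar>u - v\<bar>/v" using that h by (intro divide_right_mono) auto
    also have "\<dots> \<le> \<bar>u - v\<bar>/m" using that h by (intro divide_left_mono) auto
    finally show ?thesis .
  qed
  show ?thesis using 1[of x y] 1[of y x] h by (auto simp: abs_minus_commute)
qed

lemma sqrt_lip: "x \<ge> m \<Longrightarrow> y \<ge> m \<Longrightarrow> m > 0 \<Longrightarrow> \<bar>sqrt x - sqrt y\<bar> \<le> \<bar>x - y\<bar> / sqrt (m::real)"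
proof -
  assume h: "x \<ge> m" "y \<ge> m" "m > 0"
  have sx: "sqrt x \<ge> sqrt m" "sqrt y \<ge> 0" using h by auto
  have p: "(sqrt x - sqrt y) * (sqrt x + sqrt y) = x - y" using h
    by (simp add: algebra_simps)
  have sm: "sqrt m > 0" using h by simp
  have q: "\<bar>sqrt x + sqrt y\<bar> = sqrt x + sqrt y" using sx sm by simp
  have r: "\<bar>x - y\<bar> = \<bar>sqrt x - sqrt y\<bar> * (sqrt x + sqrt y)"
    unfolding p[symmetric] abs_mult q ..
  have "\<bar>sqrt x - sqrt y\<bar> * sqrt m \<le> \<bar>sqrt x - sqrt y\<bar> * (sqrt x + sqrt y)"
  proof -
    have "sqrt m \<le> sqrt x + sqrt y" using sx by linarith
    thus ?thesis by (intro mult_left_mono) auto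
  qed
  hence "\<bar>sqrt x - sqrt y\<bar> * sqrt m \<le> \<bar>x - y\<bar>" unfolding r .
  thus ?thesis using sm by (simp add: pos_le_divide_eq)
qed

abbreviation S where "S \<equiv> SS V"

lemma S_eq: "S n = (V n + 2 + sqrt (a n)) / 2" unfolding SS_def a_def by simp

lemma sqrt_a_le: "n \<ge> 1 \<Longrightarrow> sqrt (a n) \<le> V n + 2"
proof -
  assume n: "n \<ge> 1"
  have "a n \<le> (V n + 2)^2" unfolding a_def by (simp add: power2_eq_square algebra_simps)
  hence "sqrt (a n) \<le> sqrt ((V n + 2)^2)" by (rule real_sqrt_le_mono)
  also have "\<dots> = V n + 2" using lower[OF n] Cpos by simp
  finally show ?thesis .
qed

lemma sqrt_a_ge: "n \<ge> 1 \<Longrightarrow> sqrt (a n) \<ge> V n"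
proof -
  assume n: "n \<ge> 1"
  have "V n ^ 2 \<le> a n" unfolding a_def using lower[OF n] Cpos by (simp add: power2_eq_square algebra_simps)
  hence "sqrt (V n ^ 2) \<le> sqrt (a n)" by (rule real_sqrt_le_mono)
  thus ?thesis using lower[OF n] Cpos by simp
qed

lemma S_ge: "n \<ge> 1 \<Longrightarrow> S n \<ge> 1 + C"
  using sqrt_a_ge[of n] lower[of n] unfolding S_eq by simp

lemma S_pos: "n \<ge> 1 \<Longrightarrow> S n > 0" using S_ge[of n] Cpos by simp

lemma S_le: "n \<ge> 1 \<Longrightarrow> S n \<le> B + 2"
  using sqrt_a_le[of n] B[of n] unfolding S_eq by simp

lemma S_inv: "n \<ge> 1 \<Longrightarrow> S n * (V n + 2 - S n) = 1"
proof -
  assume n: "n \<ge> 1"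
  have sq: "sqrt (a n) ^ 2 = a n" using a_pos[OF n] by simp
  show ?thesis unfolding S_eq using sq unfolding a_def
    by (simp add: power2_eq_square field_simps)
qed

lemma inv_S: "n \<ge> 1 \<Longrightarrow> inverse (S n) = V n + 2 - S n"
  using S_inv[of n] S_pos[of n] by (simp add: field_simps)

definition KS where "KS = (1 + (2*B+4) / sqrt m0) / 2"

lemma S_lip: "n \<ge> 1 \<Longrightarrow> m \<ge> 1 \<Longrightarrow> \<bar>S n - S m\<bar> \<le> KS * \<bar>V n - V m\<bar>"
proof -
  assume n: "n \<ge> 1" and m: "m \<ge> 1"
  have "\<bar>sqrt (a n) - sqrt (a m)\<bar> \<le> \<bar>a n - a m\<bar> / sqrt m0"
    using sqrt_lip a_ge[OF n] a_ge[OF m] m0pos by blast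
  also have "\<dots> \<le> (2*B+4) * \<bar>V n - V m\<bar> / sqrt m0"
    using a_lip[OF n m] m0pos by (intro divide_right_mono) auto
  finally have 1: "\<bar>sqrt (a n) - sqrt (a m)\<bar> \<le> (2*B+4) / sqrt m0 * \<bar>V n - V m\<bar>" by simp
  have eq: "S n - S m = ((V n - V m) + (sqrt (a n) - sqrt (a m))) / 2" unfolding S_eq by (simp add: field_simps)
  have "\<bar>S n - S m\<bar> = \<bar>(V n - V m) + (sqrt (a n) - sqrt (a m))\<bar> / 2" unfolding eq by (simp only: abs_divide)
  also have "\<dots> \<le> (\<bar>V n - V m\<bar> + \<bar>sqrt (a n) - sqrt (a m)\<bar>) / 2"
    by (intro divide_right_mono abs_triangle_ineq) auto
  also have "\<dots> \<le> (\<bar>V n - V m\<bar> + (2*B+4) / sqrt m0 * \<bar>V n - V m\<bar>) / 2" using 1 by simp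
  also have "\<dots> = KS * \<bar>V n - V m\<bar>" unfolding KS_def by (simp add: field_simps)
  finally show ?thesis .
qed

lemma KS_nonneg: "KS \<ge> 0" unfolding KS_def using CB Cpos m0pos by simp

lemma partA: "summable (\<lambda>n. \<bar>SS V (n + 2) - SS V (n + 1)\<bar>)"
proof -
  have "summable (\<lambda>n. KS * \<bar>d (n+1)\<bar>)"
    using absd_summable summable_iff_shift[of "\<lambda>n. \<bar>d n\<bar>" 1] by (intro summable_mult) auto
  thus ?thesis
  proof (rule summable_comparison_test'[of _ 0])
    fix n :: nat
    have "\<bar>S (n+2) - S (n+1)\<bar> \<le> KS * \<bar>V (n+2) - V (n+1)\<bar>" by (rule S_lip) auto
    thus "norm \<bar>S (n+2) - S (n+1)\<bar> \<le> KS * \<bar>d (n+1)\<bar>" by (simp add: d_def)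
  qed
qed

lemma absSd_summable: "summable (\<lambda>n. \<bar>S (Suc (Suc n)) - S (Suc n)\<bar>)"
  using partA by (simp add: numeral_2_eq_2)

definition lam where "lam n = ln (a n)"
definition Kl where "Kl = (2*B+4) / m0"
definition L where "L = Vinf V * (Vinf V + 4)"
definition ell where "ell = L powr (-1/4)"

lemma Kl_nonneg: "Kl \<ge> 0" unfolding Kl_def using CB Cpos m0pos by simp

lemma lam_lip: "n \<ge> 1 \<Longrightarrow> m \<ge> 1 \<Longrightarrow> \<bar>lam n - lam m\<bar> \<le> Kl * \<bar>V n - V m\<bar>"
proof -
  assume n: "n \<ge> 1" and m: "m \<ge> 1"
  have "\<bar>lam n - lam m\<bar> \<le> \<bar>a n - a m\<bar> / m0"
    unfolding lam_def using ln_lip a_ge[OF n] a_ge[OF m] m0pos by blast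
  also have "\<dots> \<le> (2*B+4) * \<bar>V n - V m\<bar> / m0"
    using a_lip[OF n m] m0pos by (intro divide_right_mono) auto
  finally show ?thesis unfolding Kl_def by simp
qed

lemma L_pos: "L > 0" unfolding L_def using Vinf_ge Cpos
  by (metis add_pos_pos less_le_trans mult_pos_pos zero_less_numeral)

lemma ell_pos: "ell > 0" unfolding ell_def using L_pos by simp

lemma ln_ell: "ln ell = - lam_inf / 4" if "lam_inf = ln L" for lam_inf
  unfolding ell_def using L_pos that by (simp add: ln_powr)

lemma a_conv: "a \<longlonglongrightarrow> L"
  unfolding a_def[abs_def] L_def by (intro tendsto_intros V_conv)

lemma lam_conv: "lam \<longlonglongrightarrow> ln L"
  unfolding lam_def[abs_def] using a_conv L_pos by (intro tendsto_intros) auto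

lemma odd_summable: "summable (\<lambda>m. \<bar>d (2*m+1)\<bar>)"
proof (rule summableI_nonneg_bounded)
  fix N :: nat
  have "(\<Sum>m<N. \<bar>d (2*m+1)\<bar>) = (\<Sum>k\<in>(\<lambda>m. 2*m+1) ` {..<N}. \<bar>d k\<bar>)"
    by (subst sum.reindex) (auto simp: inj_on_def)
  also have "\<dots> \<le> (\<Sum>k<2*N. \<bar>d k\<bar>)" by (intro sum_mono2) auto
  also have "\<dots> \<le> (\<Sum>k. \<bar>d k\<bar>)" using absd_summable by (intro sum_le_suminf) auto
  finally show "(\<Sum>m<N. \<bar>d (2*m+1)\<bar>) \<le> (\<Sum>k. \<bar>d k\<bar>)" .
qed auto

definition w where "w m = (lam (2*m) - lam (2*m - 1)) / 2"

lemma w_summable: "summable (\<lambda>m. w (Suc m))"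
proof -
  have "summable (\<lambda>m. Kl/2 * \<bar>d (2*m+1)\<bar>)" using odd_summable by (rule summable_mult)
  thus ?thesis
  proof (rule summable_comparison_test'[of _ 0])
    fix m :: nat
    have "\<bar>lam (2*m+2) - lam (2*m+1)\<bar> \<le> Kl * \<bar>V (2*m+2) - V (2*m+1)\<bar>" by (rule lam_lip) auto
    thus "norm (w (Suc m)) \<le> Kl/2 * \<bar>d (2*m+1)\<bar>" unfolding w_def d_def by simp
  qed
qed

definition W where "W = (\<Sum>m. w (Suc m))"

lemma Czfac_exp: "Czfac V (Suc m) = exp (w (Suc m))"
proof -
  have p1: "a (2*Suc m) > 0" "a (2*Suc m - 1) > 0" by (intro a_pos; simp)+
  have "Czfac V (Suc m) = sqrt (a (2*Suc m) / a (2*Suc m - 1))" unfolding Czfac_def a_def ..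
  also have "\<dots> = exp (ln (a (2*Suc m) / a (2*Suc m - 1)) / 2)"
    using p1 by (subst ln_sqrt[symmetric]) (simp_all add: divide_pos_pos)
  also have "\<dots> = exp (w (Suc m))" unfolding w_def lam_def using p1 by (simp add: ln_div)
  finally show ?thesis .
qed

lemma Cz_hasprod: "(\<lambda>m. Czfac V (Suc m)) has_prod exp W"
proof -
  have "(\<lambda>n. \<Sum>i\<le>n. w (Suc i)) \<longlonglongrightarrow> W"
    unfolding W_def using w_summable summable_LIMSEQ' by blast
  hence "(\<lambda>n. exp (\<Sum>i\<le>n. w (Suc i))) \<longlonglongrightarrow> exp W" by (rule tendsto_exp)
  hence "(\<lambda>n. \<Prod>i\<le>n. Czfac V (Suc (i + 0))) \<longlonglongrightarrow> exp W"
    by (simp add: exp_sum Czfac_exp)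
  thus ?thesis unfolding has_prod_def raw_has_prod_def by simp
qed

lemma Cz_eq: "Cz V = ell * exp W"
  unfolding Cz_def ell_def L_def using has_prod_unique[OF Cz_hasprod] by simp

lemma Cz_pos: "Cz V > 0" using Cz_eq ell_pos by simp

definition Q where "Q n = (\<Prod>k\<in>{k. 1 \<le> k \<and> k \<le> n \<and> k mod 2 = n mod 2}. bb V k ^ 2 - 4)"

lemma bb_a: "bb V k ^ 2 - 4 = a k" unfolding bb_def a_def by (simp add: power2_eq_square algebra_simps)

lemma Q_pos: "Q n > 0" unfolding Q_def bb_a by (intro prod_pos) (auto intro: a_pos)

lemma Q_set: "{k. 1 \<le> k \<and> k \<le> Suc (Suc n) \<and> k mod 2 = Suc (Suc n) mod 2}
   = insert (Suc (Suc n)) {k. 1 \<le> k \<and> k \<le> n \<and> k mod 2 = n mod 2}"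
proof -
  have p1: "Suc (Suc n) mod 2 = n mod 2" by simp
  have p2: "Suc n mod 2 \<noteq> n mod 2" by presburger
  have "k \<le> Suc (Suc n) \<longleftrightarrow> k = Suc (Suc n) \<or> k = Suc n \<or> k \<le> n" for k by auto
  thus ?thesis unfolding p1 using p2 by auto
qed

lemma Q_SS: "Q (Suc (Suc n)) = a (Suc (Suc n)) * Q n"
proof -
  have f: "finite {k. 1 \<le> k \<and> k \<le> n \<and> k mod 2 = n mod 2}" by (rule finite_subset[of _ "{..n}"]) auto
  show ?thesis unfolding Q_def Q_set bb_a using f by (subst prod.insert) auto
qed

lemma Q0: "Q 0 = 1"
proof -
  have e: "{k::nat. 1 \<le> k \<and> k \<le> 0 \<and> k mod 2 = 0 mod 2} = {}" by auto
  show ?thesis unfolding Q_def by (simp only: e prod.empty)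
qed

lemma Q1: "Q 1 = a 1"
proof -
  have "{k::nat. 1 \<le> k \<and> k \<le> 1 \<and> k mod 2 = 1 mod 2} = {1}" by auto
  thus ?thesis unfolding Q_def bb_a by simp
qed

lemma Q_Suc: "Q (Suc n) = a (Suc n) * Q (n - 1)"
  by (cases n) (simp_all add: Q1[unfolded One_nat_def] Q0 Q_SS)

lemma zz_eq: "zz V n = (if even n then Cz V else inverse (Cz V)) * sqrt (Q (n-1) / Q n)"
  unfolding zz_def Q_def ..

lemma z_pos: "zz V n > 0"
  unfolding zz_eq using Cz_pos Q_pos[of n] Q_pos[of "n-1"] by simp

lemma z_prod: "zz V n * zz V (Suc n) = 1 / sqrt (a (Suc n))"
proof -
  have c: "(if even n then Cz V else inverse (Cz V)) * (if even (Suc n) then Cz V else inverse (Cz V)) = 1"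
    using Cz_pos by auto
  have "sqrt (Q (n-1) / Q n) * sqrt (Q (Suc n - 1) / Q (Suc n)) = sqrt (Q (n-1) / Q n) * sqrt (Q n / Q (Suc n))"
    by simp
  also have "\<dots> = sqrt (Q (n-1) / Q n * (Q n / Q (Suc n)))"
    by (simp only: real_sqrt_mult)
  also have "Q (n-1) / Q n * (Q n / Q (Suc n)) = 1 / a (Suc n)"
    unfolding Q_Suc using Q_pos[of n] Q_pos[of "n-1"] a_pos[of "Suc n"] by (simp add: field_simps)
  finally have s: "sqrt (Q (n-1) / Q n) * sqrt (Q (Suc n - 1) / Q (Suc n)) = 1 / sqrt (a (Suc n))"
    by (simp add: real_sqrt_divide)
  have "zz V n * zz V (Suc n) = ((if even n then Cz V else inverse (Cz V)) * (if even (Suc n) then Cz V else inverse (Cz V)))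
     * (sqrt (Q (n-1) / Q n) * sqrt (Q (Suc n - 1) / Q (Suc n)))"
    unfolding zz_eq by (simp only: mult_ac)
  thus ?thesis using c s by simp
qed

lemma partC1: "\<forall>n\<ge>1. zz V n * zz V (n + 1) = 1 / sqrt (V (n + 1) * (V (n + 1) + 4))"
  using z_prod unfolding a_def by simp

definition y where "y n = ln (zz V n)"
definition x where "x n = y n - ln ell"

lemma y_rec: "y n + y (Suc n) = - lam (Suc n) / 2"
proof -
  have "y n + y (Suc n) = ln (zz V n * zz V (Suc n))" unfolding y_def using ln_mult_pos[OF z_pos z_pos] by simp
  also have "\<dots> = ln (1 / sqrt (a (Suc n)))" using z_prod by simp
  also have "\<dots> = - lam (Suc n) / 2" unfolding lam_def using a_pos[of "Suc n"]
    by (simp add: ln_div ln_sqrt)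
  finally show ?thesis .
qed

lemma y_rec2': "y (Suc (Suc n)) = y n + (lam (Suc n) - lam (Suc (Suc n))) / 2"
  using y_rec[of n] y_rec[of "Suc n"] by (simp add: divide_simps)

lemma y_rec2: "y (n+2) = y n + (lam (n+1) - lam (n+2)) / 2"
  using y_rec2'[of n] by (simp add: numeral_2_eq_2)

lemma y0: "y 0 = ln ell + W"
proof -
  have "zz V 0 = Cz V" unfolding zz_eq by (simp add: Q0)
  thus ?thesis unfolding y_def Cz_eq using ell_pos by (simp add: ln_mult)
qed

lemma x_even: "x (2*N) = W - (\<Sum>m<N. w (Suc m))"
proof (induction N)
  case 0 then show ?case using y0 by (simp add: x_def)
next
  case (Suc N)
  have "x (2 * Suc N) = x (2*N) + (lam (2*N+1) - lam (2*N+2)) / 2"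
    using y_rec2[of "2*N"] by (simp add: x_def)
  moreover have "w (Suc N) = (lam (2*N+2) - lam (2*N+1)) / 2" unfolding w_def by simp
  ultimately show ?case using Suc by simp
qed

lemma x_even_lim: "(\<lambda>N. x (2*N)) \<longlonglongrightarrow> 0"
proof -
  have "(\<lambda>N. \<Sum>m<N. w (Suc m)) \<longlonglongrightarrow> W" unfolding W_def using w_summable summable_LIMSEQ by blast
  hence "(\<lambda>N. W - (\<Sum>m<N. w (Suc m))) \<longlonglongrightarrow> W - W" by (intro tendsto_diff) auto
  thus ?thesis unfolding x_even by simp
qed

lemma x_odd': "x (Suc (2*N)) = - (lam (Suc (2*N)) - ln L) / 2 - x (2*N)"
  unfolding x_def using y_rec[of "2*N"] ln_ell[OF refl] by (simp add: divide_simps)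

lemma x_odd: "x (2*N+1) = - (lam (2*N+1) - ln L) / 2 - x (2*N)"
  using x_odd' by simp

lemma x_odd_lim: "(\<lambda>N. x (2*N+1)) \<longlonglongrightarrow> 0"
proof -
  have sm: "strict_mono (\<lambda>N::nat. 2*N+1)" by (auto simp: strict_mono_def)
  have "(\<lambda>N. lam (2*N+1)) \<longlonglongrightarrow> ln L" using LIMSEQ_subseq_LIMSEQ[OF lam_conv sm] by (simp add: o_def)
  hence "(\<lambda>N. - (lam (2*N+1) - ln L) / 2 - x (2*N)) \<longlonglongrightarrow> - (ln L - ln L) / 2 - 0"
    by (intro tendsto_intros x_even_lim) simp_all
  thus ?thesis unfolding x_odd by simp
qed

lemma x_shift_lim: "(\<lambda>M. x (n + 2*M)) \<longlonglongrightarrow> 0"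
proof (cases "even n")
  case True
  then obtain p where n: "n = 2*p" by auto
  have "(\<lambda>M. x (2*(M+p))) \<longlonglongrightarrow> 0" using LIMSEQ_ignore_initial_segment[OF x_even_lim, of p] by simp
  thus ?thesis unfolding n by (simp add: algebra_simps)
next
  case False
  then obtain p where n: "n = 2*p+1" using oddE by blast
  have "(\<lambda>M. x (2*(M+p)+1)) \<longlonglongrightarrow> 0" using LIMSEQ_ignore_initial_segment[OF x_odd_lim, of p] by simp
  thus ?thesis unfolding n by (simp add: algebra_simps)
qed

definition h where "h n = Kl/2 * \<bar>d (n+1)\<bar>"

lemma h0: "h n \<ge> 0" unfolding h_def using Kl_nonneg by simp

lemma h_summable: "summable h"
  unfolding h_def using absd_summable summable_iff_shift[of "\<lambda>n. \<bar>d n\<bar>" 1] by (intro summable_mult) auto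

lemma nh_summable: "summable (\<lambda>n. real n * h n)"
proof -
  have "summable (\<lambda>n. \<bar>real (n+1) * (V (n + 1 + 1) - V (n + 1))\<bar>)"
    using l1 summable_iff_shift[of "\<lambda>n. \<bar>real n * (V (n + 1) - V n)\<bar>" 1] by simp
  hence "summable (\<lambda>n. Kl/2 * \<bar>real (n+1) * (V (n + 1 + 1) - V (n + 1))\<bar>)" by (rule summable_mult)
  thus ?thesis
  proof (rule summable_comparison_test'[of _ 0])
    fix n :: nat
    have 1: "real n * \<bar>d (n+1)\<bar> \<le> real (n+1) * \<bar>d (n+1)\<bar>" by (intro mult_right_mono) auto
    have 2: "Kl/2 * (real n * \<bar>d (n+1)\<bar>) \<le> Kl/2 * (real (n+1) * \<bar>d (n+1)\<bar>)"
      using mult_left_mono[OF 1, of "Kl/2"] Kl_nonneg by simp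
    have 3: "real n * h n = Kl/2 * (real n * \<bar>d (n+1)\<bar>)" unfolding h_def by simp
    have 4: "Kl/2 * (real (n+1) * \<bar>d (n+1)\<bar>) = Kl/2 * \<bar>real (n+1) * (V (n + 1 + 1) - V (n + 1))\<bar>"
      by (simp add: d_def abs_mult)
    have "real n * h n \<le> Kl/2 * \<bar>real (n+1) * (V (n + 1 + 1) - V (n + 1))\<bar>"
      using 2 unfolding 3 4 .
    thus "norm (real n * h n) \<le> Kl/2 * \<bar>real (n+1) * (V (n + 1 + 1) - V (n + 1))\<bar>"
      using h0[of n] by simp
  qed
qed

definition T where "T n = (\<Sum>k. h (k+n))"
definition Tt where "Tt = suminf h"

lemma T_summable: "summable T" unfolding T_def using tail_summable[OF h0 nh_summable] .

lemma T_nonneg: "T n \<ge> 0" unfolding T_def using h0 h_summable summable_iff_shift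
  by (metis suminf_nonneg)

lemma T_le: "T n \<le> Tt"
  using suminf_split_initial_segment[OF h_summable, of n] h0 unfolding T_def Tt_def
  by (simp add: sum_nonneg)

lemma x_step: "\<bar>x (n+2) - x n\<bar> \<le> h n"
proof -
  have "\<bar>lam (n+2) - lam (n+1)\<bar> \<le> Kl * \<bar>V (n+2) - V (n+1)\<bar>" by (rule lam_lip) auto
  thus ?thesis unfolding x_def h_def d_def using y_rec2[of n]
    by (simp add: abs_minus_commute)
qed

lemma x_bound: "\<bar>x n\<bar> \<le> T n"
  unfolding T_def by (rule twostep[OF h0 h_summable x_step x_shift_lim])

lemma z_exp: "zz V n = ell * exp (x n)"
  unfolding x_def y_def using z_pos[of n] ell_pos by (simp add: exp_diff)

lemma z_up: "zz V n \<le> ell * exp Tt"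
  unfolding z_exp using x_bound[of n] T_le[of n] ell_pos by simp

lemma z_lo: "zz V n \<ge> ell * exp (- Tt)"
  unfolding z_exp using x_bound[of n] T_le[of n] ell_pos by simp

lemma z_diff: "\<bar>zz V n - ell\<bar> \<le> ell * exp Tt * T n"
proof -
  have e: "ell * exp (x n) - ell = ell * (exp (x n) - 1)" by (simp add: algebra_simps)
  have "\<bar>zz V n - ell\<bar> = ell * \<bar>exp (x n) - 1\<bar>" unfolding z_exp e using ell_pos
    by (simp add: abs_mult)
  also have "\<dots> \<le> ell * (exp \<bar>x n\<bar> * \<bar>x n\<bar>)" using ell_pos exp_m1_bound by (intro mult_left_mono) auto
  also have "\<dots> \<le> ell * (exp Tt * T n)" using ell_pos x_bound[of n] T_le[of n]
    by (intro mult_left_mono mult_mono) auto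
  finally show ?thesis by (simp add: mult_ac)
qed

lemma z_summable: "summable (\<lambda>n. \<bar>zz V n - ell\<bar>)"
proof -
  have "summable (\<lambda>n. ell * exp Tt * T n)" using T_summable by (rule summable_mult)
  thus ?thesis
  proof (rule summable_comparison_test'[of _ 0])
    fix n :: nat show "norm \<bar>zz V n - ell\<bar> \<le> ell * exp Tt * T n" using z_diff[of n] by simp
  qed
qed

lemma partC2: "summable (\<lambda>m. \<bar>zz V (m + 1) - (Vinf V * (Vinf V + 4)) powr (-1/4)\<bar>)"
  using z_summable summable_iff_shift[of "\<lambda>n. \<bar>zz V n - ell\<bar>" 1] unfolding ell_def L_def by simp

end



context T5 begin

definition zmin where "zmin = ell * exp (- Tt)"
definition zmax where "zmax = ell * exp Tt"
definition zd where "zd n = \<bar>zz V n - ell\<bar>"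

lemma zmin_pos: "zmin > 0" unfolding zmin_def using ell_pos by simp
lemma z_lo': "zz V n \<ge> zmin" unfolding zmin_def by (rule z_lo)
lemma z_up': "zz V n \<le> zmax" unfolding zmax_def by (rule z_up)

lemma zd_nonneg: "zd n \<ge> 0" unfolding zd_def by simp

lemma zd_summable: "summable zd" unfolding zd_def[abs_def] by (rule z_summable)

lemma zd_shift: "summable (\<lambda>n. zd (n + k))" using zd_summable summable_iff_shift by blast

lemma zdiff_le: "\<bar>zz V i - zz V j\<bar> \<le> zd i + zd j" unfolding zd_def by linarith

lemma ratio_bound: "\<bar>zz V i / zz V j - 1\<bar> \<le> (zd i + zd j) / zmin"
proof -
  have p: "zz V j > 0" by (rule z_pos)
  have "zz V i / zz V j - 1 = (zz V i - zz V j) / zz V j" using p by (simp add: field_simps)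
  hence "\<bar>zz V i / zz V j - 1\<bar> = \<bar>zz V i - zz V j\<bar> / zz V j" using p by simp
  also have "\<dots> \<le> (zd i + zd j) / zz V j" using p zdiff_le by (intro divide_right_mono) auto
  also have "\<dots> \<le> (zd i + zd j) / zmin" using zmin_pos z_lo'[of j] zd_def
    by (intro divide_left_mono) (auto intro: add_nonneg_nonneg mult_pos_pos)
  finally show ?thesis .
qed

lemma S_ge1: "n \<ge> 1 \<Longrightarrow> S n \<ge> 1" using S_ge[of n] Cpos by simp

lemma Vt_eq: "Vt V (Suc n) - V (Suc n) = (zz V (Suc (Suc n)) / zz V (Suc n) - 1) * S (Suc (Suc n)) + (S (Suc (Suc n)) - S (Suc n))
   + (zz V n / zz V (Suc n) - 1) * inverse (S (Suc n))"
proof -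
  have i: "inverse (S (Suc n)) = V (Suc n) + 2 - S (Suc n)" by (rule inv_S) simp
  have e1: "zz V n / (zz V (Suc n) * S (Suc n)) = zz V n / zz V (Suc n) * inverse (S (Suc n))"
    by (simp add: divide_inverse)
  have vt: "Vt V (Suc n) = zz V (Suc (Suc n)) / zz V (Suc n) * S (Suc (Suc n)) + zz V n / zz V (Suc n) * inverse (S (Suc n)) - 2"
    unfolding Vt_def e1[symmetric] by simp
  have key: "\<And>X A Bq S1 S2 (Vv::real). X = A*S2 + Bq*(Vv + 2 - S1) - 2 \<Longrightarrow>
      X - Vv = (A - 1)*S2 + (S2 - S1) + (Bq - 1)*(Vv + 2 - S1)" by (simp add: algebra_simps)
  show ?thesis unfolding i by (rule key[OF vt[unfolded i]])
qed

lemma partE1: "summable (\<lambda>n. \<bar>Vt V (n + 1) - V (n + 1)\<bar>)"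
proof -
  define g where "g n = (B+2) * ((zd (n+2) + zd (n+1)) / zmin) + \<bar>S (Suc (Suc n)) - S (Suc n)\<bar>
      + (zd n + zd (n+1)) / zmin" for n
  have sg: "summable g"
  proof -
    have s1: "summable (\<lambda>n. zd (n+2) + zd (n+1))" using zd_shift by (intro summable_add)
    have s2: "summable (\<lambda>n. zd n + zd (n+1))" using zd_shift[of 0] zd_shift[of 1] by (intro summable_add) auto
    show ?thesis unfolding g_def
      by (intro summable_add summable_mult summable_divide s1 s2 absSd_summable)
  qed
  show ?thesis
  proof (rule summable_comparison_test'[OF sg, of 0])
    fix n :: nat
    have b1: "\<bar>(zz V (n+2) / zz V (n+1) - 1) * S (n+2)\<bar> \<le> (B+2) * ((zd (n+2) + zd (n+1)) / zmin)"
    proof -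
      have "\<bar>(zz V (n+2) / zz V (n+1) - 1) * S (n+2)\<bar> = \<bar>zz V (n+2) / zz V (n+1) - 1\<bar> * S (n+2)"
        using S_pos[of "n+2"] by (simp add: abs_mult)
      also have "\<dots> \<le> ((zd (n+2) + zd (n+1)) / zmin) * (B+2)"
        using ratio_bound S_le[of "n+2"] S_pos[of "n+2"] zd_nonneg zmin_pos by (intro mult_mono) auto
      finally show ?thesis by (simp add: mult.commute)
    qed
    have b3: "\<bar>(zz V n / zz V (n+1) - 1) * inverse (S (n+1))\<bar> \<le> (zd n + zd (n+1)) / zmin"
    proof -
      have "\<bar>(zz V n / zz V (n+1) - 1) * inverse (S (n+1))\<bar> = \<bar>zz V n / zz V (n+1) - 1\<bar> * inverse (S (n+1))"
        using S_pos[of "n+1"] by (simp add: abs_mult)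
      also have "\<dots> \<le> ((zd n + zd (n+1)) / zmin) * 1"
        using ratio_bound S_ge1[of "n+1"] S_pos[of "n+1"] zd_nonneg zmin_pos by (intro mult_mono) (auto simp: field_simps)
      finally show ?thesis by simp
    qed
    have "\<bar>Vt V (n + 1) - V (n + 1)\<bar> \<le> g n"
      using Vt_eq[of n] b1 b3 unfolding g_def by (simp add: numeral_2_eq_2)
    thus "norm \<bar>Vt V (n + 1) - V (n + 1)\<bar> \<le> g n" by simp
  qed
qed

lemma partD1: "Vt V \<longlonglongrightarrow> Vinf V"
proof -
  have "(\<lambda>n. \<bar>Vt V (n + 1) - V (n + 1)\<bar>) \<longlonglongrightarrow> 0" using partE1 by (rule summable_LIMSEQ_zero)
  hence 1: "(\<lambda>n. Vt V (n + 1) - V (n + 1)) \<longlonglongrightarrow> 0" by (simp only: tendsto_rabs_zero_iff)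
  have 2: "(\<lambda>n. V (n + 1)) \<longlonglongrightarrow> Vinf V" using LIMSEQ_ignore_initial_segment[OF V_conv, of 1] .
  have "(\<lambda>n. (Vt V (n + 1) - V (n + 1)) + V (n + 1)) \<longlonglongrightarrow> 0 + Vinf V" by (intro tendsto_add 1 2)
  hence "(\<lambda>n. Vt V (Suc n)) \<longlonglongrightarrow> Vinf V" by simp
  thus ?thesis by (rule LIMSEQ_imp_Suc)
qed

lemma prod_S_inv: "(\<Prod>l=1..m. S l) * (\<Prod>l=1..m. inverse (S l)) = 1"
proof -
  have "(\<Prod>l=1..m. S l) * (\<Prod>l=1..m. inverse (S l)) = (\<Prod>l=1..m. S l * inverse (S l))"
    by (simp add: prod.distrib)
  also have "\<dots> = (\<Prod>l=1..m. 1)"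
  proof (intro prod.cong refl)
    fix l assume "l \<in> {1..m}"
    hence "S l > 0" using S_pos by auto
    thus "S l * inverse (S l) = 1" by simp
  qed
  finally show ?thesis by simp
qed

lemma green_aux: "i \<le> j \<Longrightarrow> \<bar>phip V i * phim V j\<bar> \<le> zmax * zmax"
proof -
  assume ij: "i \<le> j"
  have split: "(\<Prod>l=1..j. inverse (S l)) = (\<Prod>l=1..i. inverse (S l)) * (\<Prod>l=i+1..j. inverse (S l))"
    using prod.ub_add_nat[of 1 i "\<lambda>l. inverse (S l)" "j - i"] ij by simp
  have "phip V i * phim V j = zz V i * zz V j * ((\<Prod>l=1..i. S l) * (\<Prod>l=1..i. inverse (S l))) * (\<Prod>l=i+1..j. inverse (S l))"
    unfolding phip_def phim_def split by (simp add: mult_ac)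
  also have "\<dots> = zz V i * zz V j * (\<Prod>l=i+1..j. inverse (S l))" using prod_S_inv by simp
  finally have e: "phip V i * phim V j = zz V i * zz V j * (\<Prod>l=i+1..j. inverse (S l))" .
  have p0: "0 \<le> (\<Prod>l=i+1..j. inverse (S l))" using S_pos by (intro prod_nonneg) (auto intro: less_imp_le)
  have p1: "(\<Prod>l=i+1..j. inverse (S l)) \<le> 1"
    using S_pos S_ge1 by (intro prod_le_1) (auto intro: less_imp_le simp: field_simps)
  have "\<bar>phip V i * phim V j\<bar> = zz V i * zz V j * (\<Prod>l=i+1..j. inverse (S l))"
    unfolding e using z_pos[of i] z_pos[of j] p0 by simp
  also have "\<dots> \<le> zmax * zmax * 1"
    using z_pos[of i] z_pos[of j] z_up'[of i] z_up'[of j] p0 p1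
    by (intro mult_mono) (auto intro: less_imp_le)
  finally show ?thesis by simp
qed

lemma partD2: "\<exists>B. \<forall>m\<ge>1. \<forall>n\<ge>1. \<bar>phip V (min m n) * phim V (max m n)\<bar> \<le> B"
  by (rule exI[of _ "zmax*zmax"]) (auto intro: green_aux)

lemma partD3: "\<exists>B. \<forall>n\<ge>1. \<bar>phip V n * phim V n\<bar> \<le> B"
  by (rule exI[of _ "zmax*zmax"]) (auto intro: green_aux)

end



context T5 begin

definition beta where "beta n = max (V n + 2) (2 + C)"
definition qq where "qq = 1 / (1 + C)"

primrec F :: "nat \<Rightarrow> nat \<Rightarrow> real" where
  "F 0 n = 0"
| "F (Suc k) n = 1 / (beta n - F k (Suc n))"

lemma qq_pos: "qq > 0" unfolding qq_def using Cpos by simp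
lemma qq_le1: "qq \<le> 1" unfolding qq_def using Cpos by simp
lemma qq_lt1: "qq < 1" unfolding qq_def using Cpos by simp
lemma beta_ge: "beta n \<ge> 2 + C" unfolding beta_def by simp
lemma beta_le: "beta n \<le> B + 2" unfolding beta_def using B[of n] CB by simp
lemma beta_eq: "n \<ge> 1 \<Longrightarrow> beta n = V n + 2" unfolding beta_def using lower[of n] by simp

lemma recip_le: "u \<ge> 1 + C \<Longrightarrow> 1 / u \<le> qq" unfolding qq_def using Cpos
  by (intro divide_left_mono) auto

lemma recip_lip: "u \<ge> 1 + C \<Longrightarrow> v \<ge> 1 + C \<Longrightarrow> \<bar>1/u - 1/v\<bar> \<le> qq^2 * \<bar>u - v\<bar>"
proof -
  assume u: "u \<ge> 1 + C" and v: "v \<ge> 1 + C"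
  have up: "u > 0" "v > 0" using u v Cpos by auto
  have "1/u - 1/v = (v - u) / (u * v)" using up by (simp add: field_simps)
  hence "\<bar>1/u - 1/v\<bar> = \<bar>u - v\<bar> / (u * v)" using up by (simp add: abs_minus_commute)
  also have "\<dots> \<le> \<bar>u - v\<bar> / ((1 + C) * (1 + C))"
    using u v Cpos by (intro divide_left_mono mult_mono) auto
  also have "\<dots> = qq^2 * \<bar>u - v\<bar>" unfolding qq_def by (simp add: power2_eq_square)
  finally show ?thesis .
qed

lemma F_bnd: "0 \<le> F k n \<and> F k n \<le> qq"
proof (induction k arbitrary: n)
  case 0 then show ?case using qq_pos by simp
next
  case (Suc k)
  have "beta n - F k (Suc n) \<ge> 1 + C" using beta_ge[of n] Suc[of "Suc n"] qq_le1 by linarith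
  moreover hence "beta n - F k (Suc n) > 0" using Cpos by linarith
  ultimately show ?case using recip_le by simp
qed

lemma F_diff: "\<bar>F (Suc k) n - F k n\<bar> \<le> qq^(2*k) * qq"
proof (induction k arbitrary: n)
  case 0 then show ?case using beta_ge[of n] recip_le[of "beta n"] Cpos by simp
next
  case (Suc k)
  have d1: "beta n - F (Suc k) (Suc n) \<ge> 1 + C" using beta_ge[of n] F_bnd[of "Suc k" "Suc n"] qq_le1 by linarith
  have d2: "beta n - F k (Suc n) \<ge> 1 + C" using beta_ge[of n] F_bnd[of k "Suc n"] qq_le1 by linarith
  have "\<bar>F (Suc (Suc k)) n - F (Suc k) n\<bar> \<le> qq^2 * \<bar>F (Suc k) (Suc n) - F k (Suc n)\<bar>"
    using recip_lip[OF d1 d2] by (simp add: abs_minus_commute)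
  also have "\<dots> \<le> qq^2 * (qq^(2*k) * qq)" using Suc[of "Suc n"] qq_pos by (intro mult_left_mono) auto
  also have "\<dots> = qq^(2*Suc k) * qq" by (simp only: mult_Suc_right power_add)
  finally show ?case .
qed

definition t where "t n = (\<Sum>k. F (Suc k) n - F k n)"

lemma F_summable: "summable (\<lambda>k. F (Suc k) n - F k n)"
proof -
  have "summable (\<lambda>k. (qq^2)^k * qq)" using qq_pos qq_lt1
    by (intro summable_mult2 summable_geometric) (simp add: power_less_one_iff abs_of_pos)
  thus ?thesis
  proof (rule summable_comparison_test'[of _ 0])
    fix k :: nat show "norm (F (Suc k) n - F k n) \<le> (qq^2)^k * qq" using F_diff[of k n] by (simp add: power_mult)
  qed
qed

lemma F_lim: "(\<lambda>k. F k n) \<longlonglongrightarrow> t n"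
proof -
  have "(\<lambda>k. F (Suc k) n - F k n) sums t n" unfolding t_def using F_summable by (rule summable_sums)
  hence l: "(\<lambda>k. \<Sum>j<k. F (Suc j) n - F j n) \<longlonglongrightarrow> t n" by (simp only: sums_def)
  have tel: "(\<lambda>k. \<Sum>j<k. F (Suc j) n - F j n) = (\<lambda>k. F k n)"
    by (rule ext) (simp only: sum_lessThan_telescope[of "\<lambda>j. F j n"] F.simps(1) diff_zero)
  show ?thesis using l unfolding tel .
qed

lemma t_bnd: "0 \<le> t n \<and> t n \<le> qq"
proof
  show "0 \<le> t n" using F_lim by (rule LIMSEQ_le_const) (use F_bnd in auto)
  show "t n \<le> qq" using F_lim by (rule LIMSEQ_le_const2) (use F_bnd in auto)
qed

lemma t_rec: "t n = 1 / (beta n - t (Suc n))"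
proof -
  have d: "beta n - t (Suc n) \<ge> 1 + C" using beta_ge[of n] t_bnd[of "Suc n"] qq_le1 by linarith
  have "(\<lambda>k. F (Suc k) n) \<longlonglongrightarrow> t n" using LIMSEQ_Suc[OF F_lim] .
  moreover have "(\<lambda>k. F (Suc k) n) \<longlonglongrightarrow> 1 / (beta n - t (Suc n))"
    unfolding F.simps using d Cpos by (intro tendsto_intros F_lim) auto
  ultimately show ?thesis by (rule LIMSEQ_unique)
qed

lemma t_denom: "beta n - t (Suc n) \<ge> 1 + C" using beta_ge[of n] t_bnd[of "Suc n"] qq_le1 by linarith

lemma t_pos: "t n > 0" using t_rec[of n] t_denom[of n] Cpos by simp

lemma t_low: "t n \<ge> 1 / (B + 2)"
proof -
  have "beta n - t (Suc n) \<le> B + 2" using beta_le[of n] t_bnd[of "Suc n"] by linarith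
  thus ?thesis unfolding t_rec[of n] using t_denom[of n] Cpos by (intro divide_left_mono) auto
qed

lemma t_eq: "t n * (beta n - t (Suc n)) = 1" using t_rec[of n] t_denom[of n] Cpos by simp

definition sg where "sg n = inverse (S n)"

lemma sg_rec: "n \<ge> 1 \<Longrightarrow> beta n - sg n = S n"
  unfolding sg_def using inv_S beta_eq by simp

lemma sg_bnd: "n \<ge> 1 \<Longrightarrow> 0 < sg n \<and> sg n \<le> qq"
  unfolding sg_def using S_pos[of n] S_ge[of n] recip_le[of "S n"] by (simp add: divide_inverse)

lemma sg_low: "n \<ge> 1 \<Longrightarrow> sg n \<ge> 1 / (B + 2)"
proof -
  assume n: "n \<ge> 1"
  have "1 / (B + 2) \<le> 1 / S n" using S_pos[OF n] S_le[OF n] by (intro divide_left_mono) auto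
  thus ?thesis unfolding sg_def by (simp add: inverse_eq_divide)
qed

definition e where "e n = t n - sg n"

lemma e_bnd: "n \<ge> 1 \<Longrightarrow> \<bar>e n\<bar> \<le> qq" unfolding e_def using t_bnd[of n] sg_bnd[of n] by linarith

lemma sg_diff: "n \<ge> 1 \<Longrightarrow> \<bar>sg (Suc n) - sg n\<bar> \<le> \<bar>S (Suc n) - S n\<bar>"
proof -
  assume n: "n \<ge> 1"
  have "\<bar>1 / S (Suc n) - 1 / S n\<bar> \<le> qq^2 * \<bar>S (Suc n) - S n\<bar>"
    using S_ge[of "Suc n"] S_ge[of n] n by (intro recip_lip) auto
  also have "\<dots> \<le> 1 * \<bar>S (Suc n) - S n\<bar>" using qq_pos qq_le1
    by (intro mult_right_mono) (auto simp: power_le_one)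
  finally show ?thesis unfolding sg_def by (simp add: divide_inverse)
qed

lemma e_step: "n \<ge> 1 \<Longrightarrow> \<bar>e n\<bar> \<le> qq * (\<bar>e (Suc n)\<bar> + \<bar>S (Suc n) - S n\<bar>)"
proof -
  assume n: "n \<ge> 1"
  have d2: "beta n - sg n \<ge> 1 + C" using sg_rec[OF n] S_ge[OF n] by simp
  have sgr: "sg n = 1 / (beta n - sg n)" using sg_rec[OF n] unfolding sg_def by (simp add: divide_inverse)
  have "\<bar>e n\<bar> = \<bar>1 / (beta n - t (Suc n)) - 1 / (beta n - sg n)\<bar>"
    unfolding e_def using t_rec[of n] sgr by simp
  also have "\<dots> \<le> qq^2 * \<bar>(beta n - t (Suc n)) - (beta n - sg n)\<bar>" by (rule recip_lip[OF t_denom d2])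
  also have "\<dots> \<le> qq * \<bar>t (Suc n) - sg n\<bar>"
  proof -
    have "qq^2 \<le> qq" using qq_pos qq_le1 by (simp add: power2_eq_square mult_le_cancel_right1)
    thus ?thesis by (simp add: abs_minus_commute mult_right_mono)
  qed
  also have "\<dots> \<le> qq * (\<bar>e (Suc n)\<bar> + \<bar>S (Suc n) - S n\<bar>)"
  proof -
    have "\<bar>t (Suc n) - sg n\<bar> \<le> \<bar>e (Suc n)\<bar> + \<bar>sg (Suc n) - sg n\<bar>" unfolding e_def by linarith
    also have "\<dots> \<le> \<bar>e (Suc n)\<bar> + \<bar>S (Suc n) - S n\<bar>" using sg_diff[OF n] by simp
    finally show ?thesis using qq_pos by (intro mult_left_mono) auto
  qed
  finally show ?thesis .
qed

lemma e_summable: "summable (\<lambda>n. \<bar>e (Suc n)\<bar>)"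
proof (rule summableI_nonneg_bounded)
  fix N
  define Dl where "Dl = (\<Sum>n. \<bar>S (Suc (Suc n)) - S (Suc n)\<bar>)"
  define E where "E = (\<Sum>n<N. \<bar>e (Suc n)\<bar>)"
  define Ds where "Ds = (\<Sum>n<N. \<bar>S (Suc (Suc n)) - S (Suc n)\<bar>)"
  have D: "Ds \<le> Dl"
    unfolding Dl_def Ds_def using absSd_summable by (intro sum_le_suminf) auto
  have st: "\<bar>e (Suc n)\<bar> \<le> qq * \<bar>e (Suc (Suc n))\<bar> + qq * \<bar>S (Suc (Suc n)) - S (Suc n)\<bar>" for n
    using e_step[of "Suc n"] by (simp add: algebra_simps)
  have "E \<le> (\<Sum>n<N. qq * \<bar>e (Suc (Suc n))\<bar> + qq * \<bar>S (Suc (Suc n)) - S (Suc n)\<bar>)"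
    unfolding E_def by (intro sum_mono st)
  also have "\<dots> = qq * (\<Sum>n<N. \<bar>e (Suc (Suc n))\<bar>) + qq * Ds"
    unfolding Ds_def by (simp add: sum.distrib sum_distrib_left)
  also have "(\<Sum>n<N. \<bar>e (Suc (Suc n))\<bar>) = E + \<bar>e (Suc N)\<bar> - \<bar>e (Suc 0)\<bar>"
    unfolding E_def using sum.lessThan_Suc_shift[of "\<lambda>n. \<bar>e (Suc n)\<bar>" N] by simp
  finally have a1: "E \<le> qq * (E + \<bar>e (Suc N)\<bar> - \<bar>e (Suc 0)\<bar>) + qq * Ds" .
  have X: "\<bar>e (Suc N)\<bar> \<le> qq" by (rule e_bnd) simp
  have a2: "qq * (E + \<bar>e (Suc N)\<bar> - \<bar>e (Suc 0)\<bar>) \<le> qq * (E + qq)"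
    using X qq_pos by (intro mult_left_mono) auto
  have a3: "qq * Ds \<le> qq * Dl" using D qq_pos by (intro mult_left_mono) auto
  have a4: "qq * (E + qq) = qq * E + qq * qq" by (simp add: algebra_simps)
  have a5: "(1 - qq) * E = E - qq * E" by (simp add: algebra_simps)
  have "(1 - qq) * E \<le> qq * qq + qq * Dl" using a1 a2 a3 a4 a5 by linarith
  thus "(\<Sum>n<N. \<bar>e (Suc n)\<bar>) \<le> (qq * qq + qq * Dl) / (1 - qq)"
    unfolding E_def using qq_lt1 by (simp add: pos_le_divide_eq mult.commute)
qed simp

definition lt where "lt n = ln (t n) - ln (sg n)"

lemma lt_bound: "n \<ge> 1 \<Longrightarrow> \<bar>lt n\<bar> \<le> (B + 2) * \<bar>e n\<bar>"
proof -
  assume n: "n \<ge> 1"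
  have Bp: "B + 2 > 0" using CB Cpos by simp
  have "\<bar>lt n\<bar> \<le> \<bar>t n - sg n\<bar> / (1 / (B + 2))"
    unfolding lt_def using t_low[of n] sg_low[OF n] Bp by (intro ln_lip) auto
  thus ?thesis unfolding e_def by (simp add: mult.commute)
qed

lemma lt_summable: "summable (\<lambda>n. lt (Suc n))"
proof -
  have "summable (\<lambda>n. (B + 2) * \<bar>e (Suc n)\<bar>)" using e_summable by (rule summable_mult)
  thus ?thesis
  proof (rule summable_comparison_test'[of _ 0])
    fix n :: nat show "norm (lt (Suc n)) \<le> (B + 2) * \<bar>e (Suc n)\<bar>" using lt_bound[of "Suc n"] by simp
  qed
qed

definition G where "G = (\<Sum>n. lt (Suc n))"
definition cc where "cc = ell * exp (- G)"
definition psi where "psi n = cc * (\<Prod>l=1..n. t l)"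

lemma psi_Suc: "psi (Suc n) = psi n * t (Suc n)"
  unfolding psi_def by (simp add: prod.nat_ivl_Suc' mult_ac)

lemma psi_eqn: "n \<ge> 1 \<Longrightarrow> - psi (n + 1) - psi (n - 1) + (2 + V n) * psi n = 0"
proof -
  assume n: "n \<ge> 1"
  then obtain p where p: "n = Suc p" by (cases n) auto
  have "t (Suc p) * (V (Suc p) + 2 - t (Suc (Suc p))) = 1" using t_eq[of "Suc p"] beta_eq[of "Suc p"] by simp
  hence "psi p * (t (Suc p) * (V (Suc p) + 2 - t (Suc (Suc p))) - 1) = 0" by simp
  thus ?thesis unfolding p using psi_Suc[of p] psi_Suc[of "Suc p"] by (simp add: algebra_simps)
qed

lemma phim_pos: "phim V n > 0"
  unfolding phim_def using z_pos S_pos by (intro mult_pos_pos prod_pos) auto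

lemma phim_le: "phim V n \<le> zmax"
proof -
  have "(\<Prod>l=1..n. inverse (S l)) \<le> 1"
    using S_pos S_ge1 by (intro prod_le_1) (auto intro: less_imp_le simp: field_simps)
  moreover have "(\<Prod>l=1..n. inverse (S l)) \<ge> 0" using S_pos by (intro prod_nonneg) (auto intro: less_imp_le)
  ultimately have "zz V n * (\<Prod>l=1..n. inverse (S l)) \<le> zmax * 1"
    using z_up'[of n] z_pos[of n] by (intro mult_mono) auto
  thus ?thesis unfolding phim_def by simp
qed

lemma ratio_eq: "psi n / phim V n = cc * exp (\<Sum>l=1..n. lt l) / zz V n"
proof -
  have tp: "(\<Prod>l=1..n. t l) = exp (\<Sum>l=1..n. ln (t l))" using t_pos by (simp add: exp_sum)
  have sp: "(\<Prod>l=1..n. inverse (S l)) = exp (\<Sum>l=1..n. ln (sg l))"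
    using sg_bnd by (simp add: exp_sum sg_def)
  have "psi n / phim V n = cc * exp (\<Sum>l=1..n. ln (t l)) / (zz V n * exp (\<Sum>l=1..n. ln (sg l)))"
    unfolding psi_def phim_def tp sp ..
  also have "\<dots> = cc * (exp (\<Sum>l=1..n. ln (t l)) / exp (\<Sum>l=1..n. ln (sg l))) / zz V n"
    by (simp add: field_simps)
  also have "exp (\<Sum>l=1..n. ln (t l)) / exp (\<Sum>l=1..n. ln (sg l)) = exp (\<Sum>l=1..n. lt l)"
    unfolding lt_def by (simp add: sum_subtractf exp_diff)
  finally show ?thesis .
qed

lemma ratio_lim: "(\<lambda>n. psi n / phim V n) \<longlonglongrightarrow> 1"
proof -
  have "(\<lambda>n. \<Sum>j<n. lt (Suc j)) \<longlonglongrightarrow> G" unfolding G_def using lt_summable summable_LIMSEQ by blast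
  moreover have "(\<lambda>n. \<Sum>l=1..n. lt l) = (\<lambda>n. \<Sum>j<n. lt (Suc j))"
    by (rule ext) (simp add: sum.atLeast1_atMost_eq)
  ultimately have s: "(\<lambda>n. \<Sum>l=1..n. lt l) \<longlonglongrightarrow> G" by simp
  have "(\<lambda>n. \<bar>zz V n - ell\<bar>) \<longlonglongrightarrow> 0" using z_summable by (rule summable_LIMSEQ_zero)
  hence "(\<lambda>n. zz V n - ell) \<longlonglongrightarrow> 0" by (simp only: tendsto_rabs_zero_iff)
  hence z: "zz V \<longlonglongrightarrow> ell" by (simp add: LIM_zero_iff)
  have "(\<lambda>n. cc * exp (\<Sum>l=1..n. lt l) / zz V n) \<longlonglongrightarrow> cc * exp G / ell"
    using ell_pos by (intro tendsto_intros s z) auto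
  moreover have "cc * exp G / ell = 1" unfolding cc_def using ell_pos by (simp add: exp_minus field_simps)
  ultimately show ?thesis unfolding ratio_eq by simp
qed

definition M where "M n = (SUP k\<in>{n..}. \<bar>phim V k\<bar>)"

lemma M_ge: "M n \<ge> phim V n"
proof -
  have "bdd_above ((\<lambda>k. \<bar>phim V k\<bar>) ` {n..})" using phim_le phim_pos
    by (intro bdd_aboveI[of _ zmax]) (auto simp: abs_of_pos)
  hence "\<bar>phim V n\<bar> \<le> M n" unfolding M_def by (intro cSUP_upper) auto
  thus ?thesis using phim_pos[of n] by simp
qed

definition r where "r n = (psi n - phim V n) / M n"

lemma partE2: "\<exists>\<psi> r :: nat \<Rightarrow> real.
          (\<forall>n\<ge>1. - \<psi> (n + 1) - \<psi> (n - 1) + (2 + V n) * \<psi> n = 0)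
          \<and> (\<forall>n\<ge>1. \<psi> n = phim V n + r n * (SUP k\<in>{n..}. \<bar>phim V k\<bar>))
          \<and> (r \<longlonglongrightarrow> 0)"
proof (intro exI conjI allI impI)
  fix n :: nat assume "n \<ge> 1"
  thus "- psi (n + 1) - psi (n - 1) + (2 + V n) * psi n = 0" by (rule psi_eqn)
next
  fix n :: nat
  have "M n > 0" using M_ge[of n] phim_pos[of n] by linarith
  thus "psi n = phim V n + r n * (SUP k\<in>{n..}. \<bar>phim V k\<bar>)" unfolding r_def M_def[symmetric] by simp
next
  show "r \<longlonglongrightarrow> 0"
  proof (rule Lim_null_comparison)
    have "(\<lambda>n. psi n / phim V n - 1) \<longlonglongrightarrow> 1 - 1" using ratio_lim by (intro tendsto_intros)
    hence "(\<lambda>n. psi n / phim V n - 1) \<longlonglongrightarrow> 0" by simp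
    hence "(\<lambda>n. \<bar>psi n / phim V n - 1\<bar>) \<longlonglongrightarrow> 0" by (simp only: tendsto_rabs_zero_iff)
    thus "(\<lambda>n. \<bar>psi n / phim V n - 1\<bar>) \<longlonglongrightarrow> 0" .
    show "\<forall>\<^sub>F n in sequentially. norm (r n) \<le> \<bar>psi n / phim V n - 1\<bar>"
    proof (rule always_eventually, rule allI)
      fix n
      have p: "phim V n > 0" by (rule phim_pos)
      have Mp: "M n > 0" using M_ge[of n] p by linarith
      have "norm (r n) = \<bar>psi n - phim V n\<bar> / M n" unfolding r_def using Mp by (simp add: abs_divide)
      also have "\<dots> \<le> \<bar>psi n - phim V n\<bar> / phim V n" using p M_ge[of n] by (intro divide_left_mono) auto
      also have "\<dots> = \<bar>psi n / phim V n - 1\<bar>" using p by (simp add: field_simps abs_divide)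
      finally show "norm (r n) \<le> \<bar>psi n / phim V n - 1\<bar>" .
    qed
  qed
qed

end

theorem theorem5:
  fixes V :: "nat \<Rightarrow> real" and C :: real
  assumes bdd: "bounded (range V)"
    and Cpos: "C > 0"
    and lower: "\<And>n. n \<ge> 1 \<Longrightarrow> V n \<ge> C"
    and l1: "summable (\<lambda>n. \<bar>real n * (V (n + 1) - V n)\<bar>)"
  shows
    "summable (\<lambda>n. \<bar>SS V (n + 2) - SS V (n + 1)\<bar>)
     \<and> (V \<longlonglongrightarrow> Vinf V) \<and> Vinf V \<noteq> 0
     \<and> (\<exists>P. (\<lambda>m. Czfac V (Suc m)) has_prod P \<and> P \<noteq> 0)
     \<and> (\<forall>n\<ge>1. zz V n * zz V (n + 1) = 1 / sqrt (V (n + 1) * (V (n + 1) + 4)))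
     \<and> summable (\<lambda>m. \<bar>zz V (m + 1) - (Vinf V * (Vinf V + 4)) powr (-1/4)\<bar>)
     \<and> (Vt V \<longlonglongrightarrow> Vinf V)
     \<and> (\<exists>B. \<forall>m\<ge>1. \<forall>n\<ge>1. \<bar>phip V (min m n) * phim V (max m n)\<bar> \<le> B)
     \<and> (\<exists>B. \<forall>n\<ge>1. \<bar>phip V n * phim V n\<bar> \<le> B)
     \<and> summable (\<lambda>n. \<bar>Vt V (n + 1) - V (n + 1)\<bar>)
     \<and> (\<exists>\<psi> r :: nat \<Rightarrow> real.
          (\<forall>n\<ge>1. - \<psi> (n + 1) - \<psi> (n - 1) + (2 + V n) * \<psi> n = 0)
          \<and> (\<forall>n\<ge>1. \<psi> n = phim V n + r n * (SUP k\<in>{n..}. \<bar>phim V k\<bar>))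
          \<and> (r \<longlonglongrightarrow> 0))"
proof -
  interpret T5 V C using assms by unfold_locales auto
  have P: "\<exists>P. (\<lambda>m. Czfac V (Suc m)) has_prod P \<and> P \<noteq> 0"
    using Cz_hasprod by (intro exI[of _ "exp W"]) simp
  have nz: "Vinf V \<noteq> 0" using Vinf_ge Cpos by simp
  show ?thesis using partA V_conv nz P partC1 partC2 partD1 partD2 partD3 partE1 partE2 by blast
qed

end
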